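(* Let $T>0$ and let $\theta:[0,T]\to[0,+\infty)$ be a continuous non-increasing function such that, for some integer $m\ge1$ and some constant $c>0$, $\theta^{2m-1}(t_1)\big(\theta(t_2)-\theta(t_1)\big)\le -c(t_2-t_1)\theta^{2m}(t_2)$ for all $0\le t_1\le t_2\le T$. Then $\theta(t)\le e^{-ct}\theta(0)$ for all $t\in[0,T]$. *)

theory Defs
  imports "HOL-Analysis.Analysis"
begin

end

theory Submission imports Defs begin

lemma sublin:
  fixes L :: "real \<Rightarrow> real"
  assumes "\<delta> > 0" "t \<ge> 0"
    and H: "\<And>t1 t2. 0 \<le> t1 \<Longrightarrow> t1 \<le> t2 \<Longrightarrow> t2 \<le> t \<Longrightarrow> t2 - t1 < \<delta> \<Longrightarrow> L t2 - L t1 \<le> e * (t2 - t1)"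
  shows "L t - L 0 \<le> e * t"
proof -
  define N where "N = nat \<lceil>t / \<delta>\<rceil> + 1"
  have N0: "N > 0" unfolding N_def by simp
  have "t / \<delta> < real N" unfolding N_def by linarith
  hence hN: "t / real N < \<delta>" using N0 \<open>\<delta>>0\<close> by (simp add: field_simps)
  have "k \<le> N \<Longrightarrow> L (real k * (t / N)) - L 0 \<le> e * (real k * (t / N))" for k
  proof (induction k)
    case 0 then show ?case by simp
  next
    case (Suc k)
    have ge: "t / N \<ge> 0" using \<open>t\<ge>0\<close> by simp
    have "real (Suc k) * (t / N) \<le> real N * (t / N)" using Suc.prems ge
      by (intro mult_right_mono) auto
    also have "\<dots> = t" using N0 by simp
    finally have le: "real (Suc k) * (t / N) \<le> t" .
    have "L (real (Suc k) * (t / N)) - L (real k * (t / N)) \<le> e * (real (Suc k) * (t / N) - real k * (t / N))"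
    proof (rule H)
      show "0 \<le> real k * (t / N)" using ge by (intro mult_nonneg_nonneg) auto
      show "real k * (t / N) \<le> real (Suc k) * (t / N)" using ge by (intro mult_right_mono) auto
      show "real (Suc k) * (t / N) \<le> t" by (fact le)
      show "real (Suc k) * (t / N) - real k * (t / N) < \<delta>" using hN by (simp add: algebra_simps add_divide_distrib)
    qed
    with Suc show ?case by (simp add: algebra_simps)
  qed
  from this[of N] show ?thesis using N0 by simp
qed

theorem lemma8p2:
  fixes \<theta> :: "real \<Rightarrow> real" and T c :: real and m :: nat
  assumes "T > 0"
    and "continuous_on {0..T} \<theta>"
    and "\<forall>t\<in>{0..T}. \<theta> t \<ge> 0"
    and "antimono_on {0..T} \<theta>"
    and "m \<ge> 1"
    and "c > 0"
    and "\<forall>t1 t2. 0 \<le> t1 \<and> t1 \<le> t2 \<and> t2 \<le> T \<longrightarrow>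
           \<theta> t1 ^ (2*m - 1) * (\<theta> t2 - \<theta> t1) \<le> - c * (t2 - t1) * \<theta> t2 ^ (2*m)"
  shows "\<forall>t\<in>{0..T}. \<theta> t \<le> exp (- c * t) * \<theta> 0"
proof
  fix t assume t: "t \<in> {0..T}"
  have mono: "\<theta> y \<le> \<theta> x" if "x \<in> {0..T}" "y \<in> {0..T}" "x \<le> y" for x y
    using assms(4) that by (auto simp: monotone_on_def)
  have th0: "\<theta> 0 \<ge> 0" using assms(1,3) by auto
  show "\<theta> t \<le> exp (- c * t) * \<theta> 0"
  proof (cases "\<theta> t = 0")
    case True then show ?thesis using th0 by simp
  next
    case False
    hence pt: "\<theta> t > 0" using assms(3) t by force
    have pos: "\<theta> s \<ge> \<theta> t" if "s \<in> {0..t}" for s using mono[of s t] that t by auto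
    define n where "n = 2*m - 1"
    have n1: "Suc n = 2*m" using assms(5) unfolding n_def by simp
    define \<phi> where "\<phi> s = \<theta> s ^ (2*m)" for s
    define L where "L s = ln (\<theta> s) + c * s" for s
    have ucont: "uniformly_continuous_on {0..t} \<phi>"
      unfolding \<phi>_def
      apply (rule compact_uniformly_continuous)
      apply (intro continuous_intros continuous_on_subset[OF assms(2)])
      using t by auto
    have pphi: "\<phi> t > 0" unfolding \<phi>_def using pt by simp
    have key: "L t - L 0 \<le> c * e * t" if e: "e > 0" for e
    proof -
      obtain \<delta> where d: "\<delta> > 0" and hd: "\<And>x y. x \<in> {0..t} \<Longrightarrow> y \<in> {0..t} \<Longrightarrow> dist y x < \<delta> \<Longrightarrow> dist (\<phi> y) (\<phi> x) < e * \<phi> t"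
        using ucont[unfolded uniformly_continuous_on_def, rule_format, of "e * \<phi> t"] e pphi by auto
      show ?thesis
      proof (rule sublin[OF d])
        show "0 \<le> t" using t by simp
        fix t1 t2 assume h: "0 \<le> t1" "t1 \<le> t2" "t2 \<le> t" "t2 - t1 < \<delta>"
        define a where "a = \<theta> t1"
        define b where "b = \<theta> t2"
        have b0: "b \<ge> \<theta> t" unfolding b_def using pos h by auto
        hence bp: "b > 0" using pt by simp
        have ba: "b \<le> a" unfolding a_def b_def using mono[of t1 t2] h t by auto
        hence ap: "a > 0" using bp by simp
        have hyp: "a ^ n * (b - a) \<le> - c * (t2 - t1) * b ^ (2*m)"
          using assms(7) h t unfolding a_def b_def n_def by auto
        have a2m: "a ^ (2*m) = a ^ n * a" by (metis n1 power_Suc mult.commute)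
        have "c * (t2 - t1) * (b ^ (2*m) / a ^ (2*m)) \<le> (a - b) / a"
        proof -
          have "c * (t2 - t1) * b ^ (2*m) \<le> a ^ n * (a - b)" using hyp by (simp add: algebra_simps)
          hence "c * (t2 - t1) * b ^ (2*m) / a ^ (2*m) \<le> a ^ n * (a - b) / (a ^ n * a)"
            unfolding a2m using ap by (intro divide_right_mono) auto
          also have "\<dots> = (a - b) / a" using ap by simp
          finally show ?thesis by simp
        qed
        moreover have "(a - b) / a \<le> ln a - ln b"
        proof -
          have "ln (b / a) \<le> b / a - 1" using ap bp by (intro ln_le_minus_one) auto
          thus ?thesis using ap bp by (simp add: ln_div field_simps)
        qed
        moreover have "1 - b ^ (2*m) / a ^ (2*m) \<le> e"
        proof -
          have "dist (\<phi> t2) (\<phi> t1) < e * \<phi> t" using hd[of t1 t2] h by (auto simp: dist_real_def)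
          hence "a ^ (2*m) - b ^ (2*m) < e * \<phi> t" unfolding \<phi>_def a_def b_def dist_real_def by simp
          moreover have "\<phi> t \<le> a ^ (2*m)" unfolding \<phi>_def
            using b0 ba pt by (intro power_mono) auto
          ultimately have "a ^ (2*m) - b ^ (2*m) \<le> e * a ^ (2*m)" using e
            by (smt (verit) mult_left_mono)
          thus ?thesis using ap by (simp add: field_simps)
        qed
        moreover have X: "c * (t2 - t1) \<ge> 0" using assms(6) h by simp
        ultimately have "c * (t2 - t1) * (1 - b ^ (2*m) / a ^ (2*m)) \<le> c * (t2 - t1) * e"
          by (intro mult_left_mono) auto
        hence "ln b - ln a + c * (t2 - t1) \<le> c * (t2 - t1) * e"
          using \<open>c * (t2 - t1) * (b ^ (2*m) / a ^ (2*m)) \<le> (a - b) / a\<close>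
                \<open>(a - b) / a \<le> ln a - ln b\<close>
          by (simp add: right_diff_distrib)
        thus "L t2 - L t1 \<le> c * e * (t2 - t1)"
          unfolding L_def a_def b_def by (simp add: algebra_simps)
      qed
    qed
    have "L t - L 0 \<le> 0"
    proof (rule ccontr)
      assume "\<not> ?thesis"
      hence g: "L t - L 0 > 0" by simp
      hence tp: "t > 0" by (cases "t = 0") (use t in auto)
      define e where "e = (L t - L 0) / (2 * c * t)"
      have "e > 0" using g tp assms(6) unfolding e_def by simp
      from key[OF this] have "L t - L 0 \<le> (L t - L 0) / 2"
        unfolding e_def using tp assms(6) by (simp add: field_simps)
      with g show False by simp
    qed
    hence "ln (\<theta> t) \<le> ln (\<theta> 0) - c * t" unfolding L_def by simp
    hence "exp (ln (\<theta> t)) \<le> exp (ln (\<theta> 0) - c * t)" by simp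
    moreover have "\<theta> 0 > 0" using pos[of 0] pt t by auto
    ultimately have "\<theta> t \<le> \<theta> 0 / exp (c * t)" using pt by (simp add: exp_diff)
    thus ?thesis by (simp add: exp_minus divide_inverse mult.commute)
  qed
qed

end
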